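(* There is a constant $b>0$ such that $|X^{(j)}_k(x)|\le b^{k+j}|x|^j$ for all $x\in\mathbb R^{n+1}$ and all $k,j\in\mathbb N_0$.
   Context: $\mathbb R_n$ is the real Clifford algebra generated by $e_1,\dots,e_n$ with $e_ie_j+e_je_i=-2\delta_{ij}$, and $|\cdot|$ is the Euclidean norm on $\mathbb R_n\cong\mathbb R^{2^n}$. A point $x=(x_0,\underline x)\in\mathbb R^{n+1}$ is identified with $x_0+\underline x$, $\underline x=\sum_jx_je_j$, and $|x|^2=x_0^2+|\underline x|^2$. The Gegenbauer polynomials are $C^\nu_j(z)=\sum_{i=0}^{[j/2]}\frac{(-1)^i(\nu)_{j-i}}{i!(j-2i)!}(2z)^{j-2i}$ with $(\nu)_j=\nu(\nu+1)\cdots(\nu+j-1)$. Set $X^{(0)}_k=1$ and for $j\in\mathbb N$ $$X^{(j)}_k(x)=\mu^j_k|x|^j\Big(C^{(n-1)/2+k}_j\big(\tfrac{x_0}{|x|}\big)+\frac{n+2k-1}{n+2k+j-1}C^{(n+1)/2+k}_{j-1}\big(\tfrac{x_0}{|x|}\big)\frac{\underline x}{|x|}\Big),$$ where $\mu^{2l}_k=(-1)^l\big(C^{(n-1)/2+k}_{2l}(0)\big)^{-1}$ and $\mu^{2l+1}_k=(-1)^l\frac{n+2k+2l}{n+2k-1}\big(C^{(n+1)/2+k}_{2l}(0)\big)^{-1}$. (For a spherical monogenic $P_k$ of degree $k$, $X^{(j)}_k(x)P_k(\underline x)$ is the monogenic extension of $\underline x^jP_k(\underline x)$.) *)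

theory Defs
  imports Complex_Main
begin

definition gegenbauer :: "real \<Rightarrow> nat \<Rightarrow> real \<Rightarrow> real" where
  "gegenbauer \<nu> j z = (\<Sum>i=0..j div 2.
      (-1)^i * pochhammer \<nu> (j - i) / (fact i * fact (j - 2*i)) * (2*z)^(j - 2*i))"

text \<open>Elements of the real Clifford algebra R_n, as coefficient functions on
  the basis blades e_A, A a subset of {1..n}; only subsets of {1..n} are relevant.\<close>
type_synonym clifford = "nat set \<Rightarrow> real"

definition cl_norm :: "nat \<Rightarrow> clifford \<Rightarrow> real" where
  "cl_norm n a = sqrt (\<Sum>A\<in>Pow {1..n}. (a A)^2)"

definition paravec :: "nat \<Rightarrow> real \<Rightarrow> (nat \<Rightarrow> real) \<Rightarrow> clifford" where
  "paravec n s v = (\<lambda>A. if A = {} then s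
                         else if (\<exists>i\<in>{1..n}. A = {i}) then v (the_elem A) else 0)"

definition pnorm :: "nat \<Rightarrow> real \<Rightarrow> (nat \<Rightarrow> real) \<Rightarrow> real" where
  "pnorm n x0 xs = sqrt (x0^2 + (\<Sum>i=1..n. (xs i)^2))"

definition mu :: "nat \<Rightarrow> nat \<Rightarrow> nat \<Rightarrow> real" where
  "mu n k j = (if even j then
       (-1)^(j div 2) / gegenbauer ((real n - 1)/2 + real k) j 0
     else
       (-1)^(j div 2) * ((real n + 2*real k + 2*real (j div 2)) / (real n + 2*real k - 1))
         / gegenbauer ((real n + 1)/2 + real k) (j - 1) 0)"

definition Xjk :: "nat \<Rightarrow> nat \<Rightarrow> nat \<Rightarrow> real \<Rightarrow> (nat \<Rightarrow> real) \<Rightarrow> clifford" where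
  "Xjk n k j x0 xs = (if j = 0 then paravec n 1 (\<lambda>_. 0) else
     (let r = pnorm n x0 xs; t = x0 / r in
      paravec n (mu n k j * r^j * gegenbauer ((real n - 1)/2 + real k) j t)
        (\<lambda>i. mu n k j * r^j * ((real n + 2*real k - 1) / (real n + 2*real k + real j - 1))
              * gegenbauer ((real n + 1)/2 + real k) (j - 1) t * (xs i / r))))"

end

theory Submission
  imports Defs
begin

lemma poch_mono: "0 \<le> (x::real) \<Longrightarrow> x \<le> y \<Longrightarrow> pochhammer x m \<le> pochhammer y m"
  unfolding pochhammer_prod by (intro prod_mono) auto

lemma poch_nat_bound: "pochhammer (real N + 1) m \<le> fact m * 2^(N+m)"
proof -
  have e1: "fact (N+m) = (fact N :: real) * pochhammer (real N + 1) m"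
  proof -
    have "pochhammer (1::real) (N+m) = pochhammer 1 N * pochhammer (1 + of_nat N) m"
      by (rule pochhammer_product')
    then show ?thesis unfolding pochhammer_fact by (simp add: add.commute)
  qed
  have e2: "fact (N+m) = (fact N * (fact m * real ((N+m) choose m)) :: real)"
  proof -
    have "fact m * fact (N+m - m) * ((N+m) choose m) = fact (N+m)"
      by (rule binomial_fact_lemma) simp
    then have "(fact (N+m)::real) = of_nat (fact m * fact N * ((N+m) choose m))" by simp
    then show ?thesis by (simp add: mult_ac)
  qed
  have c: "real ((N+m) choose m) \<le> 2^(N+m)"
  proof -
    have "(N+m) choose m \<le> 2^(N+m)" by (rule binomial_le_pow2)
    then have "real ((N+m) choose m) \<le> real (2^(N+m))" by (rule of_nat_mono)
    then show ?thesis by simp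
  qed
  have "pochhammer (real N + 1) m = fact m * real ((N+m) choose m)"
    using e1 e2 by simp
  also have "\<dots> \<le> fact m * 2^(N+m)" by (intro mult_left_mono c) auto
  finally show ?thesis .
qed

lemma poch_bound: "0 \<le> (x::real) \<Longrightarrow> x \<le> real N \<Longrightarrow> pochhammer x m \<le> fact m * 2^(N+m)"
  using poch_mono[of x "real N + 1" m] poch_nat_bound[of N m] by linarith

lemma poch_lower: "1/2 \<le> (x::real) \<Longrightarrow> fact l / 2^l \<le> pochhammer x l"
proof (induction l)
  case 0 then show ?case by simp
next
  case (Suc l)
  have "fact (Suc l) / 2^(Suc l) = (fact l / 2^l) * ((real l + 1)/2)" by (simp add: field_simps)
  also have "\<dots> \<le> pochhammer x l * (x + real l)"
    using Suc by (intro mult_mono) (auto intro: pochhammer_nonneg)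
  finally show ?case by (simp add: pochhammer_Suc)
qed

lemma geg_zero: "gegenbauer \<nu> (2*l) 0 = (-1)^l * pochhammer \<nu> l / fact l"
proof -
  have "gegenbauer \<nu> (2*l) 0 = (\<Sum>i=0..l. if i = l then (-1)^i * pochhammer \<nu> (2*l - i) / (fact i * fact (2*l - 2*i)) else 0)"
    unfolding gegenbauer_def by (intro sum.cong) (auto simp: power_0_left)
  also have "\<dots> = (-1)^l * pochhammer \<nu> l / fact l" by (simp add: mult_2)
  finally show ?thesis .
qed

lemma geg_term:
  assumes "0 \<le> \<nu>" "\<nu> \<le> real N" "\<bar>t\<bar> \<le> 1" "i \<le> j div 2"
  shows "\<bar>(-1)^i * pochhammer \<nu> (j - i) / (fact i * fact (j - 2*i)) * (2*t)^(j - 2*i)\<bar> \<le> 2^N * 8^j"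
proof -
  have ij: "2*i \<le> j" using assms(4) by linarith
  have p0: "0 \<le> pochhammer \<nu> (j-i)" using assms(1)
    by (simp add: pochhammer_prod prod_nonneg)
  have "\<bar>(2*t)^(j - 2*i)\<bar> \<le> 2^(j-2*i)"
  proof -
    have "\<bar>t\<bar>^(j-2*i) \<le> 1" by (rule power_le_one) (use assms(3) in auto)
    then show ?thesis by (simp add: abs_mult power_mult_distrib power_abs)
  qed
  also have "(2::real)^(j-2*i) \<le> 2^j" by (intro power_increasing) auto
  finally have a: "\<bar>(2*t)^(j - 2*i)\<bar> \<le> 2^j" .
  have fe: "fact (j-i) = (fact i * fact (j - 2*i) * ((j-i) choose i) :: real)"
  proof -
    have "fact i * fact (j - i - i) * ((j-i) choose i) = fact (j-i)"
      by (rule binomial_fact_lemma) (use ij in simp)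
    moreover have "j - i - i = j - 2*i" by simp
    ultimately have "(fact (j-i)::real) = of_nat (fact i * fact (j - 2*i) * ((j-i) choose i))" by simp
    then show ?thesis by simp
  qed
  have bc: "real ((j-i) choose i) \<le> 2^j"
  proof -
    have "real ((j-i) choose i) \<le> 2^(j-i)"
    proof -
      have "(j-i) choose i \<le> 2^(j-i)" by (rule binomial_le_pow2)
      then have "real ((j-i) choose i) \<le> real (2^(j-i))" by (rule of_nat_mono)
      then show ?thesis by simp
    qed
    also have "(2::real)^(j-i) \<le> 2^j" by (intro power_increasing) auto
    finally show ?thesis .
  qed
  have "pochhammer \<nu> (j-i) / (fact i * fact (j - 2*i)) \<le> fact (j-i) * 2^(N+(j-i)) / (fact i * fact (j - 2*i))"
    by (intro divide_right_mono poch_bound assms) auto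
  also have "\<dots> = real ((j-i) choose i) * (2::real)^(N+(j-i))" unfolding fe by simp
  also have "\<dots> \<le> 2^j * 2^(N+j)"
    by (intro mult_mono bc power_increasing) auto
  finally have b: "pochhammer \<nu> (j-i) / (fact i * fact (j - 2*i)) \<le> 2^j * 2^(N+j)" .
  have "\<bar>(-1)^i * pochhammer \<nu> (j - i) / (fact i * fact (j - 2*i)) * (2*t)^(j - 2*i)\<bar>
      = pochhammer \<nu> (j-i) / (fact i * fact (j - 2*i)) * \<bar>(2*t)^(j - 2*i)\<bar>"
    using p0 by (simp add: abs_mult)
  also have "\<dots> \<le> (2^j * 2^(N+j)) * 2^j"
    by (intro mult_mono a b) (use p0 in auto)
  also have "\<dots> = 2^N * 8^j" by (simp add: power_add power_mult_distrib[symmetric])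
  finally show ?thesis .
qed

lemma geg_bound:
  assumes "0 \<le> \<nu>" "\<nu> \<le> real N" "\<bar>t\<bar> \<le> 1"
  shows "\<bar>gegenbauer \<nu> j t\<bar> \<le> 2^N * 16^j"
proof -
  have "\<bar>gegenbauer \<nu> j t\<bar> \<le> (\<Sum>i=0..j div 2. \<bar>(-1)^i * pochhammer \<nu> (j - i) / (fact i * fact (j - 2*i)) * (2*t)^(j - 2*i)\<bar>)"
    unfolding gegenbauer_def by (rule sum_abs)
  also have "\<dots> \<le> (\<Sum>i=0..j div 2. 2^N * 8^j)"
    by (intro sum_mono geg_term assms) auto
  also have "\<dots> = (real (j div 2) + 1) * (2^N * 8^j)" by simp
  also have "\<dots> \<le> 2^j * (2^N * 8^j)"
  proof -
    have "real (j div 2) + 1 \<le> real j + 1" by simp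
    also have "real j + 1 \<le> 2^j"
      by (induction j) (auto simp: algebra_simps)
    finally show ?thesis by (intro mult_right_mono) auto
  qed
  also have "\<dots> = 2^N * 16^j" by (simp add: power_mult_distrib[symmetric])
  finally show ?thesis .
qed

lemma cl_norm_paravec:
  "cl_norm n (paravec n s v) = sqrt (s^2 + (\<Sum>i=1..n. (v i)^2))"
proof -
  let ?f = "\<lambda>A. (paravec n s v A)^2"
  define S where "S = insert {} ((\<lambda>i. {i}) ` {1..n})"
  have "(\<Sum>A\<in>Pow {1..n}. ?f A) = (\<Sum>A\<in>S. ?f A)"
    by (rule sum.mono_neutral_right) (auto simp: S_def paravec_def)
  also have "\<dots> = ?f {} + (\<Sum>A\<in>(\<lambda>i. {i}) ` {1..n}. ?f A)"
    unfolding S_def by (rule sum.insert) auto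
  also have "(\<Sum>A\<in>(\<lambda>i. {i}) ` {1..n}. ?f A) = (\<Sum>i=1..n. ?f {i})"
    by (rule sum.reindex_cong[where l="\<lambda>i. {i}"]) (auto simp: inj_on_def)
  also have "(\<Sum>i=1..n. ?f {i}) = (\<Sum>i=1..n. (v i)^2)"
    by (intro sum.cong) (auto simp: paravec_def)
  finally show ?thesis by (simp add: cl_norm_def paravec_def)
qed

lemma inv_bound: "fact l / 2^l \<le> (p::real) \<Longrightarrow> \<bar>(-1)^l / ((-1)^l * p / fact l)\<bar> \<le> 2^l"
proof -
  assume a: "fact l / 2^l \<le> p"
  have p0: "p > 0" using a by (smt (verit) divide_pos_pos fact_gt_zero zero_less_power)
  have "\<bar>(-1)^l / ((-1)^l * p / fact l)\<bar> = fact l / p" using p0 by (simp add: abs_mult)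
  also have "\<dots> \<le> 2^l" using a p0 by (simp add: field_simps)
  finally show ?thesis .
qed

lemma mu_bound:
  assumes "1 \<le> n" "1 \<le> j"
  shows "\<bar>mu n k j\<bar> \<le> 2^j * (real n + 2*real k + real j)"
proof (cases "even j")
  case True
  then obtain l where l: "j = 2*l" by blast
  define \<nu> where "\<nu> = (real n - 1)/2 + real k"
  have m: "mu n k j = (-1)^l / ((-1)^l * pochhammer \<nu> l / fact l)"
    using True by (simp add: mu_def l geg_zero \<nu>_def)
  show ?thesis
  proof (cases "\<nu> = 0")
    case True
    have "l \<noteq> 0" using l assms by auto
    then have "mu n k j = 0" using m True by (simp add: pochhammer_0_left)
    then show ?thesis using assms by simp
  next
    case False
    have "\<nu> \<ge> 1/2"
    proof (cases "k = 0")
      case True then have "n \<noteq> 1" using False \<nu>_def by auto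
      then show ?thesis using True assms \<nu>_def by auto
    next
      case False
      then have "real k \<ge> 1" "real n \<ge> 1" using assms by auto
      then show ?thesis unfolding \<nu>_def by (simp add: field_simps)
    qed
    then have "\<bar>mu n k j\<bar> \<le> 2^l" unfolding m by (intro inv_bound poch_lower)
    also have "(2::real)^l \<le> 2^j" by (intro power_increasing) (auto simp: l)
    also have "\<dots> \<le> 2^j * (real n + 2*real k + real j)" using assms by simp
    finally show ?thesis .
  qed
next
  case False
  then obtain l where l: "j = 2*l+1" using oddE by blast
  define \<nu> where "\<nu> = (real n + 1)/2 + real k"
  define R where "R = (real n + 2*real k + 2*real l) / (real n + 2*real k - 1)"
  have jd: "j div 2 = l" "j - 1 = 2*l" using l by auto
  have m: "mu n k j = R * ((-1)^l / ((-1)^l * pochhammer \<nu> l / fact l))"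
    using False unfolding mu_def jd \<nu>_def R_def geg_zero by simp
  have "real n \<ge> 1" using assms by simp
  then have "\<nu> \<ge> 1/2" unfolding \<nu>_def by (simp add: field_simps)
  then have i: "\<bar>(-1)^l / ((-1)^l * pochhammer \<nu> l / fact l)\<bar> \<le> 2^l" by (intro inv_bound poch_lower)
  have R: "\<bar>R\<bar> \<le> real n + 2*real k + real j"
  proof (cases "real n + 2*real k - 1 = 0")
    case True then show ?thesis by (simp add: R_def)
  next
    case False
    have h: "n + 2*k \<ge> 2"
    proof (rule ccontr)
      assume "\<not> ?thesis" then have "n + 2*k = 1" using assms by linarith
      then have "real (n + 2*k) = 1" by simp
      then show False using False by simp
    qed
    have "real (n+2*k) \<ge> real 2" using h by (rule of_nat_mono)
    then have "real n + 2*real k - 1 \<ge> 1" by simp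
    then have D: "1 \<le> real n + 2*real k - 1" .
    have num: "0 \<le> real n + 2*real k + 2*real l" by simp
    have R0: "0 \<le> R" unfolding R_def using D num by simp
    have "R \<le> (real n + 2*real k + 2*real l) / 1"
      unfolding R_def by (rule divide_left_mono) (use D num in auto)
    also have "\<dots> \<le> real n + 2*real k + real j" using l by simp
    finally show ?thesis using R0 by simp
  qed
  have "\<bar>mu n k j\<bar> \<le> (real n + 2*real k + real j) * 2^l"
    unfolding m abs_mult by (intro mult_mono R i) auto
  also have "\<dots> \<le> (real n + 2*real k + real j) * 2^j"
    by (intro mult_left_mono power_increasing) (auto simp: l)
  finally show ?thesis by (simp add: mult.commute)
qed


lemma sqrt_sum_le: "sqrt (s^2 + w) \<le> \<bar>s\<bar> + \<bar>c\<bar>" if "0 \<le> w" "w \<le> c^2" for s w c :: real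
proof -
  have e: "(\<bar>s\<bar> + \<bar>c\<bar>)^2 = s^2 + c^2 + 2 * (\<bar>s\<bar> * \<bar>c\<bar>)"
    by (simp add: power2_eq_square algebra_simps)
  have "0 \<le> \<bar>s\<bar> * \<bar>c\<bar>" by simp
  then have "s^2 + w \<le> (\<bar>s\<bar> + \<bar>c\<bar>)^2" using that unfolding e by linarith
  then have "sqrt (s^2 + w) \<le> sqrt ((\<bar>s\<bar> + \<bar>c\<bar>)^2)" by (rule real_sqrt_le_mono)
  also have "\<dots> = \<bar>s\<bar> + \<bar>c\<bar>" by simp
  finally show ?thesis .
qed

lemma pn_facts:
  fixes n :: nat and x0 :: real and xs :: "nat \<Rightarrow> real"
  defines "r \<equiv> pnorm n x0 xs"
  shows "\<bar>x0 / r\<bar> \<le> 1" "(\<Sum>i=1..n. (xs i / r)^2) \<le> 1" "0 \<le> r"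
proof -
  define S where "S = (\<Sum>i=1..n. (xs i)^2)"
  have S0: "0 \<le> S" unfolding S_def by (intro sum_nonneg) auto
  have rd: "r = sqrt (x0^2 + S)" unfolding r_def pnorm_def S_def by simp
  have r2: "r^2 = x0^2 + S" unfolding rd using S0 by simp
  show r0: "0 \<le> r" unfolding rd using S0 by simp
  have "sqrt (x0^2) \<le> sqrt (x0^2 + S)" using S0 by (intro real_sqrt_le_mono) simp
  then have ax: "\<bar>x0\<bar> \<le> r" unfolding rd by simp
  show "\<bar>x0 / r\<bar> \<le> 1"
  proof (cases "r = 0")
    case True then show ?thesis by simp
  next
    case False
    then have rp: "0 < r" using r0 by simp
    have "\<bar>x0 / r\<bar> = \<bar>x0\<bar> / r" using rp by (simp add: abs_divide)
    also have "\<dots> \<le> 1" using rp ax by (simp add: divide_le_eq_1_pos)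
    finally show ?thesis .
  qed
  show "(\<Sum>i=1..n. (xs i / r)^2) \<le> 1"
  proof (cases "r = 0")
    case True then show ?thesis by simp
  next
    case False
    then have rp: "0 < r^2" using r0 by simp
    have "(\<Sum>i=1..n. (xs i / r)^2) = S / r^2"
      unfolding S_def by (simp add: power_divide sum_divide_distrib)
    also have "\<dots> \<le> 1" using rp r2 by (simp add: divide_le_eq_1_pos)
    finally show ?thesis .
  qed
qed

theorem lemma3p3:
  fixes n :: nat
  assumes "1 \<le> n"
  shows "\<exists>b::real. b > 0 \<and> (\<forall>(x0::real) (xs::nat \<Rightarrow> real) (k::nat) (j::nat).
           cl_norm n (Xjk n k j x0 xs) \<le> b ^ (k + j) * (pnorm n x0 xs) ^ j)"
proof (intro exI conjI allI)
  define b :: real where "b = 2^(2*n+7)"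
  show "b > 0" by (simp add: b_def)
  fix x0 :: real and xs :: "nat \<Rightarrow> real" and k j :: nat
  have b1: "1 \<le> b" by (simp add: b_def)
  show "cl_norm n (Xjk n k j x0 xs) \<le> b ^ (k + j) * (pnorm n x0 xs) ^ j"
  proof (cases "j = 0")
    case True
    have "cl_norm n (Xjk n k j x0 xs) = 1" using True
      by (simp add: Xjk_def cl_norm_paravec)
    also have "1 \<le> b^(k+j) * (pnorm n x0 xs)^j" using True b1 by (simp add: one_le_power)
    finally show ?thesis .
  next
    case False
    then have j1: "1 \<le> j" by simp
    define r where "r = pnorm n x0 xs"
    define t where "t = x0 / r"
    define m where "m = mu n k j"
    define f where "f = (real n + 2*real k - 1) / (real n + 2*real k + real j - 1)"
    define G1 where "G1 = gegenbauer ((real n - 1)/2 + real k) j t"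
    define G2 where "G2 = gegenbauer ((real n + 1)/2 + real k) (j - 1) t"
    define s where "s = m * r^j * G1"
    define c where "c = m * r^j * f * G2"
    have X: "Xjk n k j x0 xs = paravec n s (\<lambda>i. c * (xs i / r))"
      using False unfolding Xjk_def s_def c_def m_def f_def G1_def G2_def t_def r_def Let_def
      by (simp add: mult.assoc)
    have t1: "\<bar>t\<bar> \<le> 1" unfolding t_def r_def by (rule pn_facts(1))
    have q1: "(\<Sum>i=1..n. (xs i / r)^2) \<le> 1" unfolding r_def by (rule pn_facts(2))
    have r0: "0 \<le> r" unfolding r_def by (rule pn_facts(3))
    have "(\<Sum>i=1..n. (c * (xs i / r))^2) = c^2 * (\<Sum>i=1..n. (xs i / r)^2)"
      by (simp only: power_mult_distrib sum_distrib_left)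
    also have "\<dots> \<le> c^2" using q1 by (simp add: mult_left_le)
    finally have w: "(\<Sum>i=1..n. (c * (xs i / r))^2) \<le> c^2" .
    have "cl_norm n (Xjk n k j x0 xs) \<le> \<bar>s\<bar> + \<bar>c\<bar>"
      unfolding X cl_norm_paravec by (intro sqrt_sum_le w sum_nonneg) auto
    define A :: real where "A = 2^j * 2^(n+2*k+j) * (2^(n+k) * 16^j)"
    have mb: "\<bar>m\<bar> \<le> 2^j * 2^(n+2*k+j)"
    proof -
      have "\<bar>m\<bar> \<le> 2^j * (real n + 2*real k + real j)" unfolding m_def by (intro mu_bound assms j1)
      also have "real n + 2*real k + real j \<le> 2^(n+2*k+j)"
      proof -
        have "real (n+2*k+j) < 2^(n+2*k+j)" by (metis of_nat_less_two_power)
        then show ?thesis by simp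
      qed
      finally show ?thesis by simp
    qed
    have g1: "\<bar>G1\<bar> \<le> 2^(n+k) * 16^j" unfolding G1_def
      by (intro geg_bound t1) (use assms in auto)
    have "\<bar>G2\<bar> \<le> 2^(n+k) * 16^(j-1)" unfolding G2_def
      by (intro geg_bound t1) (use assms in auto)
    also have "(2::real)^(n+k) * 16^(j-1) \<le> 2^(n+k) * 16^j"
      by (intro mult_left_mono power_increasing) auto
    finally have g2: "\<bar>G2\<bar> \<le> 2^(n+k) * 16^j" .
    have f1: "\<bar>f\<bar> \<le> 1"
    proof -
      have "0 \<le> real n + 2*real k - 1" using assms by simp
      moreover have "real n + 2*real k - 1 \<le> real n + 2*real k + real j - 1" by simp
      ultimately show ?thesis unfolding f_def by (cases "real n + 2*real k + real j - 1 = 0") (auto simp: abs_div_pos divide_le_eq_1)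
    qed
    have rj: "0 \<le> r^j" using r0 by simp
    have sb: "\<bar>s\<bar> \<le> A * r^j"
    proof -
      have "\<bar>s\<bar> = \<bar>m\<bar> * \<bar>G1\<bar> * r^j" unfolding s_def using r0 by (simp add: abs_mult)
      also have "\<dots> \<le> (2^j * 2^(n+2*k+j)) * (2^(n+k) * 16^j) * r^j"
        by (intro mult_mono mb g1 rj) auto
      finally show ?thesis unfolding A_def .
    qed
    have cb: "\<bar>c\<bar> \<le> A * r^j"
    proof -
      have "\<bar>c\<bar> = \<bar>m\<bar> * (\<bar>f\<bar> * \<bar>G2\<bar>) * r^j" unfolding c_def using r0 by (simp add: abs_mult)
      also have "\<dots> \<le> (2^j * 2^(n+2*k+j)) * (1 * (2^(n+k) * 16^j)) * r^j"
        by (intro mult_mono mb g2 f1 rj) auto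
      finally show ?thesis unfolding A_def by simp
    qed
    have Ab: "2 * A \<le> b^(k+j)"
    proof -
      have h16: "(16::real)^j = 2^(4*j)" by (simp add: power_mult)
      have "2 * A = 2^(Suc ((j + (n+2*k+j)) + ((n+k) + 4*j)))"
        unfolding A_def h16 by (simp only: power_add power_Suc mult.assoc)
      also have "Suc ((j + (n+2*k+j)) + ((n+k) + 4*j)) = 2*n+1+3*k+6*j" by simp
      also have "(2::real)^(2*n+1+3*k+6*j) \<le> 2^((2*n+7)*(k+j))"
      proof (rule power_increasing)
        have "(2*n+1)*1 \<le> (2*n+1)*(k+j)" using j1 by (intro mult_le_mono2) simp
        then show "2*n+1+3*k+6*j \<le> (2*n+7)*(k+j)" by (simp add: algebra_simps)
      qed simp
      also have "\<dots> = b^(k+j)" unfolding b_def by (simp add: power_mult)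
      finally show ?thesis .
    qed
    have "\<bar>s\<bar> + \<bar>c\<bar> \<le> (2*A) * r^j" using sb cb by simp
    also have "\<dots> \<le> b^(k+j) * r^j" by (intro mult_right_mono Ab rj)
    finally show ?thesis using \<open>cl_norm n (Xjk n k j x0 xs) \<le> \<bar>s\<bar> + \<bar>c\<bar>\<close> unfolding r_def by linarith
  qed
qed

end
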